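(* Let $d\ge 1$, $K\ge 2$. Let $\Sigma_X\in\mathbb{R}^{d\times d}$ be symmetric positive definite and $P\in\mathbb{R}^{K\times K}$ be symmetric positive definite. Let $\boldsymbol{x}\in\mathbb{R}^d$ with $\boldsymbol{x}\neq \boldsymbol{0}$, let $y\in\mathbb{R}$ and $\boldsymbol{\theta}\in\mathbb{R}^d$ with residual $r:=y-\boldsymbol{x}^\top\boldsymbol{\theta}\neq 0$. Let $\boldsymbol{\sigma}\in\mathbb{R}^K$ be a probability vector ($\sigma_k\ge 0$, $\sum_k\sigma_k=1$) and $\mathbf{e}_{c}\in\{0,1\}^K$ the one-hot vector of a class $c\in\{1,\dots,K\}$, with $\boldsymbol{\sigma}\neq\mathbf{e}_c$. Define $$\mathrm{IF}_{\mathrm{MSE}}=\Sigma_X^{-1}\boldsymbol{x}\,r\in\mathbb{R}^d,\qquad \mathrm{IF}_{\mathrm{CE}}=-(\Sigma_X\otimes P)^{-1}\big(\boldsymbol{x}\otimes(\boldsymbol{\sigma}-\mathbf{e}_c)\big)\in\mathbb{R}^{dK},$$ and $R=\|\mathrm{IF}_{\mathrm{CE}}\|_2/\|\mathrm{IF}_{\mathrm{MSE}}\|_2$. Then $$\frac{\|\boldsymbol{\sigma}-\mathbf{e}_c\|_2}{\kappa_2(\Sigma_X)\,\lambda_{\max}(P)\,|r|}\;\le\; R\;\le\;\frac{\sqrt{2}\,\kappa_2(\Sigma_X)}{\lambda_{\min}(P)\,|r|},$$ where $\kappa_2(\Sigma_X)=\|\Sigma_X\|_2\|\Sigma_X^{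-1}\|_2=\lambda_{\max}(\Sigma_X)/\lambda_{\min}(\Sigma_X)$.
   Context: $\otimes$ denotes the Kronecker product and $\|\cdot\|_2$ the Euclidean norm for vectors and the spectral norm for matrices; $\lambda_{\min},\lambda_{\max}$ denote smallest and largest eigenvalues. Interpretation in the paper: $\Sigma_X=\mathbb{E}[\boldsymbol{x}\boldsymbol{x}^\top]$ is the feature covariance (the Hessian of the squared loss $\tfrac12(y-\boldsymbol{x}^\top\boldsymbol{\theta})^2$ in a linear regression model), $\mathrm{IF}_{\mathrm{MSE}}$ is the influence function of the least-squares estimator at the sample $(\boldsymbol{x},y)$; for a $K$-class softmax linear classifier with parameters $\boldsymbol{\beta}\in\mathbb{R}^{d\times K}$, $\boldsymbol{\sigma}=\mathrm{softmax}(\boldsymbol{x}^\top\boldsymbol{\beta})$, $P$ plays the role of the (expected) softmax covariance matrix $\mathrm{diag}(\boldsymbol{\sigma})-\boldsymbol{\sigma}\boldsymbol{\sigma}^\top$, the cross-entropy Hessian is taken to be $\Sigma_X\otimes P$, and $\mathrm{IF}_{\mathrm{CE}}$ is the cross-entropy influence function at the sample with true label $c$. *)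

theory Defs
  imports "HOL-Analysis.Analysis"
begin

definition spd :: "real^'n^'n \<Rightarrow> bool" where
  "spd A \<longleftrightarrow> transpose A = A \<and> (\<forall>v. v \<noteq> 0 \<longrightarrow> v \<bullet> (A *v v) > 0)"

definition eigvals :: "real^'n^'n \<Rightarrow> real set" where
  "eigvals A = {l. \<exists>v. v \<noteq> 0 \<and> A *v v = l *s v}"

definition lambda_max :: "real^'n^'n \<Rightarrow> real" where
  "lambda_max A = Max (eigvals A)"

definition lambda_min :: "real^'n^'n \<Rightarrow> real" where
  "lambda_min A = Min (eigvals A)"

definition spec_norm :: "real^'n^'m \<Rightarrow> real" where
  "spec_norm A = onorm (\<lambda>v. A *v v)"

definition kappa2 :: "real^'n^'n \<Rightarrow> real" where
  "kappa2 A = spec_norm A * spec_norm (matrix_inv A)"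

definition kron :: "real^'n^'n \<Rightarrow> real^'m^'m \<Rightarrow> real^('n \<times> 'm)^('n \<times> 'm)" where
  "kron A B = (\<chi> p q. A$(fst p)$(fst q) * B$(snd p)$(snd q))"

definition kronv :: "real^'n \<Rightarrow> real^'m \<Rightarrow> real^('n \<times> 'm)" where
  "kronv x y = (\<chi> p. x$(fst p) * y$(snd p))"

end

theory Submission
  imports Defs
begin

lemma inv_props:
  fixes A :: "real^'n^'n"
  assumes "invertible A"
  shows "A ** matrix_inv A = mat 1 \<and> matrix_inv A ** A = mat 1"
  using assms unfolding matrix_inv_def invertible_def by (rule someI_ex)

lemma spd_invertible:
  fixes A :: "real^'n^'n"
  assumes "spd A" shows "invertible A"
proof -
  have "\<forall>x. A *v x = 0 \<longrightarrow> x = 0"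
  proof (intro allI impI)
    fix x assume "A *v x = 0"
    then show "x = 0" using assms unfolding spd_def by (metis inner_zero_right less_irrefl)
  qed
  then show ?thesis using invertible_left_inverse matrix_left_invertible_ker by blast
qed

lemma sym_dot:
  fixes A :: "real^'n^'n"
  assumes "transpose A = A" shows "(A *v x) \<bullet> y = x \<bullet> (A *v y)"
  by (metis assms dot_lmul_matrix transpose_matrix_vector)

lemma mv_scale: "(A::real^'n^'m) *v (c *\<^sub>R x) = c *\<^sub>R (A *v x)"
  by (simp add: matrix_vector_mult_def vec_eq_iff sum_distrib_left algebra_simps)

lemma ab_zero:
  fixes a b :: real
  assumes "\<forall>t. a * t + b * t^2 \<le> 0" shows "a = 0"
proof (rule ccontr)
  assume "a \<noteq> 0"
  define B where "B = \<bar>b\<bar> + 1"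
  define t where "t = a / (2 * B)"
  define q where "q = a^2 / (4 * B)"
  have h: "a * t + b * t^2 \<le> 0" using assms by blast
  have pos: "B > 0" unfolding B_def by simp
  have qpos: "q > 0" using \<open>a \<noteq> 0\<close> pos unfolding q_def by simp
  have 1: "a * t = 2 * q" unfolding t_def q_def using pos by (simp add: power2_eq_square field_simps)
  have 2: "b * t^2 \<ge> - (\<bar>b\<bar> * t^2)" using mult_right_mono[of "-\<bar>b\<bar>" b "t^2"] by simp
  have 3: "\<bar>b\<bar> * t^2 = q * (\<bar>b\<bar> / B)" unfolding t_def q_def using pos by (simp add: power2_eq_square field_simps)
  have "\<bar>b\<bar> / B \<le> 1" using pos unfolding B_def by simp
  then have "q * (\<bar>b\<bar> / B) \<le> q" using qpos mult_left_le[of "\<bar>b\<bar> / B" q] by linarith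
  then have "a * t + b * t^2 > 0" using 1 2 3 qpos by linarith
  then show False using h by simp
qed

lemma sq_expand:
  fixes a b :: "'a::real_inner"
  shows "norm (a + t *\<^sub>R b)^2 = a \<bullet> a + 2*t*(a \<bullet> b) + t^2 * (b \<bullet> b)"
proof -
  have "norm (a + t *\<^sub>R b)^2 = (a + t *\<^sub>R b) \<bullet> (a + t *\<^sub>R b)" by (simp add: power2_norm_eq_inner)
  also have "\<dots> = a \<bullet> a + t*(a \<bullet> b) + t*(b \<bullet> a) + t*t*(b \<bullet> b)"
    by (simp add: inner_add_left inner_add_right algebra_simps)
  finally show ?thesis by (simp add: inner_commute[of b a] power2_eq_square)
qed

lemma eig_key:
  fixes B :: "real^'n^'n"
  assumes "spd B"
  shows "\<exists>M. M \<in> eigvals B \<and> (\<forall>w. norm (B *v w) \<le> M * norm w)"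
proof -
  have sym: "transpose B = B" using assms spd_def by blast
  let ?S = "sphere (0::real^'n) 1"
  have "(axis undefined 1 :: real^'n) \<in> ?S" by (simp add: norm_axis_1)
  then have ne: "?S \<noteq> {}" by blast
  have cont: "continuous_on ?S (\<lambda>v. norm (B *v v))"
    by (intro continuous_on_norm linear_continuous_on matrix_vector_mul_bounded_linear)
  obtain v where v: "v \<in> ?S" "\<forall>y\<in>?S. norm (B *v y) \<le> norm (B *v v)"
    using continuous_attains_sup[OF compact_sphere ne cont] by blast
  define M where "M = norm (B *v v)"
  have nv: "norm v = 1" using v by simp
  have bound: "\<forall>w. norm (B *v w) \<le> M * norm w"
  proof
    fix w show "norm (B *v w) \<le> M * norm w"
    proof (cases "w = 0")
      case True then show ?thesis by simp
    next
      case False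
      let ?u = "(1/norm w) *\<^sub>R w"
      have "?u \<in> ?S" using False by simp
      then have "norm (B *v ?u) \<le> M" using v M_def by blast
      then have "norm w * norm (B *v ?u) \<le> norm w * M" by (simp add: mult_left_mono)
      moreover have "norm w * norm (B *v ?u) = norm (B *v w)" using False by (simp add: mv_scale)
      ultimately show ?thesis by (simp add: mult.commute)
    qed
  qed
  have key: "(B *v v) \<bullet> (B *v w) = M^2 * (v \<bullet> w)" for w
  proof -
    have "\<forall>t. (2*((B *v v) \<bullet> (B *v w) - M^2 * (v \<bullet> w))) * t + ((B *v w) \<bullet> (B *v w) - M^2 * (w \<bullet> w)) * t^2 \<le> 0"
    proof
      fix t
      have "norm (B *v (v + t *\<^sub>R w)) \<le> M * norm (v + t *\<^sub>R w)" using bound by blast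
      then have "norm (B *v (v + t *\<^sub>R w))^2 \<le> M^2 * norm (v + t *\<^sub>R w)^2" 
        by (metis norm_ge_zero power_mono power_mult_distrib)
      moreover have "norm (B *v (v + t *\<^sub>R w))^2 = (B *v v)\<bullet>(B *v v) + 2*t*((B *v v) \<bullet> (B *v w)) + t^2 * ((B *v w) \<bullet> (B *v w))"
        by (simp add: matrix_vector_right_distrib mv_scale sq_expand)
      moreover have "norm (v + t *\<^sub>R w)^2 = v\<bullet>v + 2*t*(v\<bullet>w) + t^2*(w\<bullet>w)"
        by (simp add: sq_expand)
      moreover have "(B *v v)\<bullet>(B *v v) = M^2" by (simp add: M_def power2_norm_eq_inner)
      moreover have "v\<bullet>v = 1" using nv by (simp add: power2_norm_eq_inner[symmetric])
      ultimately show "(2*((B *v v) \<bullet> (B *v w) - M^2 * (v \<bullet> w))) * t + ((B *v w) \<bullet> (B *v w) - M^2 * (w \<bullet> w)) * t^2 \<le> 0"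
        by (simp add: algebra_simps)
    qed
    then have "2*((B *v v) \<bullet> (B *v w) - M^2 * (v \<bullet> w)) = 0" by (rule ab_zero)
    then show ?thesis by simp
  qed
  have BBv: "B *v (B *v v) = M^2 *\<^sub>R v"
  proof -
    let ?d = "B *v (B *v v) - M^2 *\<^sub>R v"
    have "?d \<bullet> w = 0" for w using key[of w] sym_dot[OF sym, of "B *v v" w] by (simp add: inner_diff_left)
    then have "?d \<bullet> ?d = 0" by blast
    then show ?thesis by simp
  qed
  define u where "u = B *v v + M *\<^sub>R v"
  have Bu: "B *v u = M *\<^sub>R u" unfolding u_def
    by (simp add: matrix_vector_right_distrib mv_scale BBv power2_eq_square algebra_simps)
  have "u \<noteq> 0"
  proof
    assume "u = 0"
    then have "B *v v = - M *\<^sub>R v" unfolding u_def by (simp add: eq_neg_iff_add_eq_0) 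
    then have "v \<bullet> (B *v v) = - M * (v \<bullet> v)" by simp
    moreover have "v \<bullet> (B *v v) > 0" using assms nv unfolding spd_def by (metis norm_zero zero_neq_one)
    moreover have "M \<ge> 0" by (simp add: M_def)
    moreover have "v \<bullet> v \<ge> 0" by simp
    moreover have "M * (v \<bullet> v) \<ge> 0" using \<open>M \<ge> 0\<close> by simp
    ultimately show False by linarith
  qed
  then have "M \<in> eigvals B" unfolding eigvals_def using Bu by (auto simp: scalar_mult_eq_scaleR)
  then show ?thesis using bound by blast
qed

lemma eig_pos:
  fixes B :: "real^'n^'n"
  assumes "spd B" "l \<in> eigvals B" shows "l > 0"
proof -
  obtain v where v: "v \<noteq> 0" "B *v v = l *s v" using assms(2) unfolding eigvals_def by blast
  have "v \<bullet> (B *v v) > 0" using assms(1) v(1) unfolding spd_def by blast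
  then have "l * (v \<bullet> v) > 0" using v(2) by (simp add: scalar_mult_eq_scaleR)
  moreover have "v \<bullet> v > 0" using v(1) by simp
  ultimately show ?thesis by (simp add: zero_less_mult_iff)
qed

lemma eig_finite:
  fixes B :: "real^'n^'n"
  assumes sym: "transpose B = B" shows "finite (eigvals B)"
proof -
  let ?E = "eigvals B"
  define f where "f l = (SOME v. v \<noteq> 0 \<and> B *v v = l *s v)" for l
  have f: "f l \<noteq> 0 \<and> B *v f l = l *s f l" if "l \<in> ?E" for l
    using that someI_ex[of "\<lambda>v. v \<noteq> 0 \<and> B *v v = l *s v"] unfolding f_def eigvals_def by blast
  have orth: "f l1 \<bullet> f l2 = 0" if "l1 \<in> ?E" "l2 \<in> ?E" "l1 \<noteq> l2" for l1 l2
  proof -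
    have "(B *v f l1) \<bullet> f l2 = f l1 \<bullet> (B *v f l2)" by (rule sym_dot[OF sym])
    then have "l1 * (f l1 \<bullet> f l2) = l2 * (f l1 \<bullet> f l2)" using f[OF that(1)] f[OF that(2)]
      by (simp add: scalar_mult_eq_scaleR)
    then have "(l1 - l2) * (f l1 \<bullet> f l2) = 0" by (simp add: algebra_simps)
    then show ?thesis using that(3) by simp
  qed
  have inj: "inj_on f ?E"
  proof (rule inj_onI)
    fix l1 l2 assume a: "l1 \<in> ?E" "l2 \<in> ?E" "f l1 = f l2"
    show "l1 = l2"
    proof (rule ccontr)
      assume "l1 \<noteq> l2"
      then have "f l1 \<bullet> f l1 = 0" using orth[OF a(1,2)] a(3) by simp
      then show False using f[OF a(1)] by simp
    qed
  qed
  have "pairwise orthogonal (f ` ?E)"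
    unfolding pairwise_def orthogonal_def using orth by blast
  moreover have "0 \<notin> f ` ?E" using f by auto
  ultimately have "independent (f ` ?E)" by (rule pairwise_orthogonal_independent)
  then have "finite (f ` ?E)" using independent_bound by blast
  then show ?thesis using inj finite_image_iff by blast
qed

lemma lmax_props:
  fixes B :: "real^'n^'n"
  assumes "spd B"
  shows "lambda_max B \<in> eigvals B \<and> (\<forall>w. norm (B *v w) \<le> lambda_max B * norm w)"
proof -
  obtain M where M: "M \<in> eigvals B" "\<forall>w. norm (B *v w) \<le> M * norm w" using eig_key[OF assms] by blast
  have fin: "finite (eigvals B)" using assms eig_finite spd_def by blast
  have le: "l \<le> M" if l: "l \<in> eigvals B" for l
  proof -
    obtain v where v: "v \<noteq> 0" "B *v v = l *s v" using l unfolding eigvals_def by blast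
    have e: "norm (B *v v) = \<bar>l\<bar> * norm v" using v(2) by (simp add: scalar_mult_eq_scaleR)
    have "norm (B *v v) \<le> M * norm v" using M(2) by (rule spec)
    then have "\<bar>l\<bar> * norm v \<le> M * norm v" using e by linarith
    moreover have "norm v > 0" using v(1) by simp
    ultimately have "\<bar>l\<bar> \<le> M" by (rule mult_right_le_imp_le)
    then show ?thesis by simp
  qed
  have lm: "lambda_max B = M" unfolding lambda_max_def by (rule Max_eqI[OF fin le M(1)])
  show ?thesis unfolding lm using M by blast
qed

lemma lmin_props:
  fixes B :: "real^'n^'n"
  assumes "spd B"
  shows "lambda_min B \<in> eigvals B \<and> (\<forall>l\<in>eigvals B. lambda_min B \<le> l)"
proof -
  have fin: "finite (eigvals B)" using assms eig_finite spd_def by blast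
  have ne: "eigvals B \<noteq> {}" using eig_key[OF assms] by blast
  show ?thesis unfolding lambda_min_def using Min_in[OF fin ne] Min_le[OF fin] by blast
qed

lemma sum_pair_prod:
  fixes f :: "'n::finite \<Rightarrow> real" and g :: "'m::finite \<Rightarrow> real"
  shows "(\<Sum>r\<in>UNIV. f (fst r) * g (snd r)) = (\<Sum>m\<in>UNIV. f m) * (\<Sum>n\<in>UNIV. g n)"
proof -
  have "(\<Sum>m\<in>UNIV. f m) * (\<Sum>n\<in>UNIV. g n) = (\<Sum>m\<in>UNIV. \<Sum>n\<in>UNIV. f m * g n)" by (rule sum_product)
  also have "\<dots> = (\<Sum>r\<in>UNIV \<times> UNIV. f (fst r) * g (snd r))" by (simp add: sum.cartesian_product split_beta)
  finally show ?thesis by simp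
qed

lemma kron_mult:
  fixes A C :: "real^'n^'n" and B D :: "real^'m^'m"
  shows "kron A B ** kron C D = kron (A ** C) (B ** D)"
proof -
  have "(\<Sum>r\<in>UNIV. A$i$(fst r) * B$k$(snd r) * (C$(fst r)$j * D$(snd r)$l))
      = (\<Sum>m\<in>UNIV. A$i$m * C$m$j) * (\<Sum>n\<in>UNIV. B$k$n * D$n$l)" for i j k l
    using sum_pair_prod[of "\<lambda>m. A$i$m * C$m$j" "\<lambda>n. B$k$n * D$n$l"] by (simp add: mult_ac)
  then show ?thesis
    by (simp add: kron_def matrix_matrix_mult_def vec_eq_iff)
qed

lemma kron_one: "kron (mat 1 :: real^'n^'n) (mat 1 :: real^'m^'m) = mat 1"
  by (auto simp: kron_def mat_def vec_eq_iff prod_eq_iff)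

lemma kron_kronv:
  fixes A :: "real^'n^'n" and B :: "real^'m^'m"
  shows "kron A B *v kronv a b = kronv (A *v a) (B *v b)"
proof -
  have "(\<Sum>r\<in>UNIV. A$i$(fst r) * B$k$(snd r) * (a$(fst r) * b$(snd r)))
      = (\<Sum>m\<in>UNIV. A$i$m * a$m) * (\<Sum>n\<in>UNIV. B$k$n * b$n)" for i k
    using sum_pair_prod[of "\<lambda>m. A$i$m * a$m" "\<lambda>n. B$k$n * b$n"] by (simp add: mult_ac)
  then show ?thesis
    by (simp add: kron_def kronv_def matrix_vector_mult_def vec_eq_iff)
qed

lemma norm_kronv:
  fixes a :: "real^'n" and b :: "real^'m"
  shows "norm (kronv a b) = norm a * norm b"
proof -
  have "kronv a b \<bullet> kronv a b = (a \<bullet> a) * (b \<bullet> b)"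
    using sum_pair_prod[of "\<lambda>m. a$m * a$m" "\<lambda>n. b$n * b$n"] by (simp add: kronv_def inner_vec_def mult_ac)
  then show ?thesis by (simp add: norm_eq_sqrt_inner real_sqrt_mult)
qed

lemma kappa_ge1:
  fixes A :: "real^'n^'n"
  assumes "invertible A" shows "kappa2 A \<ge> 1"
proof -
  have "(\<lambda>v. A *v v) \<circ> (\<lambda>v. matrix_inv A *v v) = (\<lambda>v. v)"
    using inv_props[OF assms] by (auto simp: matrix_vector_mul_assoc)
  then have "onorm (\<lambda>v::real^'n. v) \<le> spec_norm A * spec_norm (matrix_inv A)"
    unfolding spec_norm_def
    by (metis onorm_compose matrix_vector_mul_bounded_linear)
  then show ?thesis unfolding kappa2_def using onorm_id[where 'a="real^'n"] by simp
qed

lemma inv_spd: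
  fixes P :: "real^'n^'n"
  assumes "spd P" shows "spd (matrix_inv P)"
proof -
  let ?Q = "matrix_inv P"
  have PQ: "P ** ?Q = mat 1" "?Q ** P = mat 1" using inv_props[OF spd_invertible[OF assms]] by auto
  have sym: "transpose P = P" using assms spd_def by blast
  have "transpose ?Q ** P = mat 1" using arg_cong[OF PQ(1), of transpose] sym by (simp add: matrix_transpose_mul)
  then have "transpose ?Q = ?Q"
    by (metis PQ(1) matrix_mul_assoc matrix_mul_lid matrix_mul_rid)
  moreover have "v \<bullet> (?Q *v v) > 0" if "v \<noteq> 0" for v
  proof -
    have Pz: "P *v (?Q *v v) = v" using PQ(1) by (simp add: matrix_vector_mul_assoc)
    then have "?Q *v v \<noteq> 0" using that by auto
    then have "(?Q *v v) \<bullet> (P *v (?Q *v v)) > 0" using assms spd_def by blast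
    then show ?thesis using Pz by (simp add: inner_commute)
  qed
  ultimately show ?thesis unfolding spd_def by blast
qed

lemma norm_sig:
  fixes sigma :: "real^'k"
  assumes "\<forall>k. sigma $ k \<ge> 0" "(\<Sum>k\<in>UNIV. sigma $ k) = 1"
  shows "norm (sigma - axis c 1) \<le> sqrt 2"
proof -
  have le1: "sigma $ k \<le> 1" for k
    using member_le_sum[of k UNIV "\<lambda>k. sigma $ k"] assms by simp
  have pt: "(sigma $ k - axis c 1 $ k)^2 \<le> sigma $ k + axis c 1 $ k" for k
  proof (cases "k = c")
    case True
    have h: "(1 - sigma$k) * (1 - sigma$k) \<le> (1 - sigma$k) * 1"
      using mult_left_mono[of "1 - sigma$k" 1 "1 - sigma$k"] assms(1) le1[of k] by simp
    have e: "(sigma$k - 1)^2 = (1 - sigma$k) * (1 - sigma$k)" by (simp add: power2_eq_square algebra_simps)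
    have "axis c 1 $ k = (1::real)" using True by (simp add: axis_def)
    then have e1: "(sigma$k - axis c 1 $ k)^2 = (sigma$k - 1)^2" and e2: "sigma $ k + axis c 1 $ k = sigma $ k + 1" by simp_all
    have "(sigma$k - axis c 1 $ k)^2 = (1 - sigma$k) * (1 - sigma$k)" using e1 e by simp
    also have "\<dots> \<le> 1 - sigma$k" using h by simp
    also have "\<dots> \<le> sigma$k + axis c 1 $ k" using e2 assms(1)[rule_format, of k] by linarith
    finally show ?thesis .
  next
    case False
    then show ?thesis using assms(1) le1[of k] mult_left_le[of "sigma$k" "sigma$k"] by (simp add: axis_def power2_eq_square)
  qed
  have "(norm (sigma - axis c 1))^2 = (\<Sum>k\<in>UNIV. (sigma $ k - axis c 1 $ k)^2)"
    unfolding power2_norm_eq_inner by (simp add: inner_vec_def power2_eq_square)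
  also have "\<dots> \<le> (\<Sum>k\<in>UNIV. sigma $ k + axis c 1 $ k)" by (rule sum_mono[OF pt])
  also have "\<dots> = 2" using assms(2) by (simp add: sum.distrib axis_def)
  finally show ?thesis by (simp add: real_le_rsqrt)
qed

theorem mainTheorem1:
  fixes SigmaX :: "real^'d^'d" and P :: "real^'k^'k"
    and x theta :: "real^'d" and y :: real
    and sigma :: "real^'k" and c :: 'k
  assumes K2: "CARD('k) \<ge> 2"
    and SX: "spd SigmaX" and Ppd: "spd P"
    and xnz: "x \<noteq> 0"
    and rnz: "y - x \<bullet> theta \<noteq> 0"
    and sig_nonneg: "\<forall>k. sigma $ k \<ge> 0"
    and sig_sum: "(\<Sum>k\<in>UNIV. sigma $ k) = 1"
    and sig_ne: "sigma \<noteq> axis c 1"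
  shows
    "let r = y - x \<bullet> theta;
         IF_MSE = matrix_inv SigmaX *v (r *s x);
         IF_CE = - (matrix_inv (kron SigmaX P) *v kronv x (sigma - axis c 1));
         R = norm IF_CE / norm IF_MSE
     in norm (sigma - axis c 1) / (kappa2 SigmaX * lambda_max P * \<bar>r\<bar>) \<le> R
        \<and> R \<le> sqrt 2 * kappa2 SigmaX / (lambda_min P * \<bar>r\<bar>)"
proof -
  define r where "r = y - x \<bullet> theta"
  define s where "s = sigma - axis c 1"
  define Ai where "Ai = matrix_inv SigmaX"
  define Q where "Q = matrix_inv P"
  have AI: "SigmaX ** Ai = mat 1" "Ai ** SigmaX = mat 1"
    using inv_props[OF spd_invertible[OF SX]] unfolding Ai_def by auto
  have PQ: "P ** Q = mat 1" "Q ** P = mat 1"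
    using inv_props[OF spd_invertible[OF Ppd]] unfolding Q_def by auto
  have Kinv: "matrix_inv (kron SigmaX P) *v kronv x s = kronv (Ai *v x) (Q *v s)"
  proof -
    let ?K = "kron SigmaX P"
    have "kron Ai Q ** ?K = mat 1" by (simp add: kron_mult AI PQ kron_one)
    then have inv: "invertible ?K" using invertible_left_inverse by blast
    have "?K *v kronv (Ai *v x) (Q *v s) = kronv x s"
      by (simp add: kron_kronv matrix_vector_mul_assoc PQ AI)
    then have "matrix_inv ?K *v kronv x s = matrix_inv ?K *v (?K *v kronv (Ai *v x) (Q *v s))" by simp
    also have "\<dots> = kronv (Ai *v x) (Q *v s)" using inv_props[OF inv] by (simp add: matrix_vector_mul_assoc)
    finally show ?thesis .
  qed
  have nCE: "norm (- (matrix_inv (kron SigmaX P) *v kronv x s)) = norm (Ai *v x) * norm (Q *v s)"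
    by (simp only: norm_minus_cancel Kinv norm_kronv)
  have nMSE: "norm (Ai *v (r *s x)) = \<bar>r\<bar> * norm (Ai *v x)"
    by (simp add: scalar_mult_eq_scaleR mv_scale)
  have "SigmaX *v (Ai *v x) = x" using AI by (simp add: matrix_vector_mul_assoc)
  then have nA: "norm (Ai *v x) > 0" using xnz by auto
  have rpos: "\<bar>r\<bar> > 0" using rnz r_def by simp
  define N where "N = norm (Q *v s)"
  define S where "S = norm s"
  define k where "k = kappa2 SigmaX"
  define Lmax where "Lmax = lambda_max P"
  define Lmin where "Lmin = lambda_min P"
  have k1: "k \<ge> 1" unfolding k_def by (rule kappa_ge1[OF spd_invertible[OF SX]])
  have Lmaxp: "Lmax > 0" unfolding Lmax_def using lmax_props[OF Ppd] eig_pos[OF Ppd] by blast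
  have Lminp: "Lmin > 0" unfolding Lmin_def using lmin_props[OF Ppd] eig_pos[OF Ppd] by blast
  have PQs: "P *v (Q *v s) = s" using PQ by (simp add: matrix_vector_mul_assoc)
  have low: "S \<le> Lmax * N"
    using lmax_props[OF Ppd] PQs unfolding S_def N_def Lmax_def by metis
  have S2: "S \<le> sqrt 2" unfolding S_def s_def by (rule norm_sig[OF sig_nonneg sig_sum])
  have up: "N \<le> S / Lmin"
  proof -
    have Qspd: "spd Q" unfolding Q_def by (rule inv_spd[OF Ppd])
    define mu where "mu = lambda_max Q"
    have mu: "mu \<in> eigvals Q" "\<forall>w. norm (Q *v w) \<le> mu * norm w"
      using lmax_props[OF Qspd] unfolding mu_def by auto
    have mup: "mu > 0" using eig_pos[OF Qspd mu(1)] .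
    obtain u where u: "u \<noteq> 0" "Q *v u = mu *s u" using mu(1) unfolding eigvals_def by blast
    have "u = P *v (Q *v u)" using PQ by (simp add: matrix_vector_mul_assoc)
    also have "\<dots> = mu *\<^sub>R (P *v u)" using u(2) by (simp add: scalar_mult_eq_scaleR mv_scale)
    finally have e: "u = mu *\<^sub>R (P *v u)" .
    have "P *v u = (1/mu) *s u"
      using arg_cong[OF e, of "\<lambda>z. (1/mu) *\<^sub>R z"] mup by (simp add: scalar_mult_eq_scaleR)
    then have "1/mu \<in> eigvals P" unfolding eigvals_def using u(1) by blast
    then have "Lmin \<le> 1/mu" unfolding Lmin_def using lmin_props[OF Ppd] by blast
    then have "mu \<le> 1/Lmin" using mup Lminp by (simp add: field_simps)
    then have "mu * S \<le> S / Lmin" unfolding S_def using mult_right_mono[of mu "1/Lmin" "norm s"] by (simp add: divide_inverse mult.commute)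
    moreover have "N \<le> mu * S" using mu(2) unfolding N_def S_def by blast
    ultimately show ?thesis by linarith
  qed
  have R: "norm (- (matrix_inv (kron SigmaX P) *v kronv x s)) / norm (Ai *v (r *s x)) = N / \<bar>r\<bar>"
    using nCE nMSE nA unfolding N_def by simp
  have g1: "S / (k * Lmax * \<bar>r\<bar>) \<le> N / \<bar>r\<bar>"
  proof -
    have "Lmax * N \<ge> 0" using Lmaxp unfolding N_def by simp
    then have "Lmax * N \<le> k * (Lmax * N)" using k1 mult_right_mono[of 1 k "Lmax * N"] by simp
    then have "S \<le> k * Lmax * N" using low by (simp add: mult.assoc)
    then have "S / (k * Lmax) \<le> N" using k1 Lmaxp by (simp add: pos_divide_le_eq mult.commute)
    then show ?thesis using rpos by (simp add: divide_right_mono flip: divide_divide_eq_left)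
  qed
  have g2: "N / \<bar>r\<bar> \<le> sqrt 2 * k / (Lmin * \<bar>r\<bar>)"
  proof -
    have "S / Lmin \<le> sqrt 2 / Lmin" using S2 Lminp by (simp add: divide_right_mono)
    also have "\<dots> \<le> sqrt 2 * k / Lmin" using k1 Lminp by (simp add: divide_right_mono)
    finally have "N \<le> sqrt 2 * k / Lmin" using up by linarith
    then show ?thesis using rpos by (simp add: divide_right_mono flip: divide_divide_eq_left)
  qed
  have goal: "norm s / (kappa2 SigmaX * lambda_max P * \<bar>r\<bar>) \<le> norm (- (matrix_inv (kron SigmaX P) *v kronv x s)) / norm (Ai *v (r *s x))
     \<and> norm (- (matrix_inv (kron SigmaX P) *v kronv x s)) / norm (Ai *v (r *s x)) \<le> sqrt 2 * kappa2 SigmaX / (lambda_min P * \<bar>r\<bar>)"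
    unfolding R using g1 g2 unfolding S_def k_def Lmax_def Lmin_def by blast
  show ?thesis
    using goal unfolding Let_def r_def s_def Ai_def by blast
qed

end
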